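(* For any $a\in\mathbb R$ and $\beta\in\mathbb S^1$, let $t_0=-\log\sqrt{1+a^2}$ and $s=\frac{-a}{\sqrt{1+a^2}+1}=-\tan\big(\tfrac12\tan^{-1}a\big)$. Then $$\gamma_{\beta,a}(t+t_0)=\gamma^{\mathrm v}_{\beta+\pi/2-2\tan^{-1}s,\ s}(t)\qquad\text{for all }t\in\mathbb R.$$
   Context: Horocyclic parameterization: $\gamma_{\beta,a}(t)=e^{i\beta}\frac{(2+ia)\tanh(t/2)+ia}{ia\tanh(t/2)-2+ia}$, $(\beta,a,t)\in\mathbb S^1\times\mathbb R\times\mathbb R$. Vertex parameterization: $\gamma^{\mathrm v}_{\omega,s}(t)=e^{i\omega}\frac{s+i\tanh(t/2)}{1+is\tanh(t/2)}$, $(\omega,s)\in\mathbb S^1\times(-1,1)$, $t\in\mathbb R$. Both are unit-speed geodesics of the Poincaré metric $g_H=\frac{4|dz|^2}{(1-|z|^2)^2}$ on the open unit disk. *)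

theory Defs
  imports "HOL-Analysis.Analysis"
begin

text \<open>Horocyclic parameterization; the angle beta in S^1 is represented by a real number.\<close>
definition gamma_h :: "real \<Rightarrow> real \<Rightarrow> real \<Rightarrow> complex" where
  "gamma_h \<beta> a t =
     cis \<beta> * (((2 + \<i> * of_real a) * of_real (tanh (t/2)) + \<i> * of_real a) /
               (\<i> * of_real a * of_real (tanh (t/2)) - 2 + \<i> * of_real a))"

text \<open>Vertex parameterization, for omega in S^1 (a real angle) and s in (-1,1).\<close>
definition gamma_v :: "real \<Rightarrow> real \<Rightarrow> real \<Rightarrow> complex" where
  "gamma_v \<omega> s t =
     cis \<omega> * ((of_real s + \<i> * of_real (tanh (t/2))) /
               (1 + \<i> * of_real s * of_real (tanh (t/2))))"

end

theory Submission
  imports Defs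
begin

lemma key_alg:
  fixes A R S F :: complex
  assumes "R^2 = 1 + A^2" "S * (R + 1) = - A" "R + 1 \<noteq> 0"
  shows "((2 + \<i>*A) * (1 - R*F) + \<i>*A*(1 + R*F)) * (R * ((1 + F) + \<i>*S*(1 - F)))
       = \<i> * (1 + \<i>*A) * (S*(1 + F) + \<i>*(1 - F)) * (\<i>*A*(1 - R*F) - 2*(1 + R*F) + \<i>*A*(1 + R*F))"
proof -
  have i2: "\<i>^2 = (-1::complex)" by simp
  have "(R + 1) * (((2 + \<i>*A) * (1 - R*F) + \<i>*A*(1 + R*F)) * (R * ((1 + F) + \<i>*S*(1 - F))))
       = (R + 1) * (\<i> * (1 + \<i>*A) * (S*(1 + F) + \<i>*(1 - F)) * (\<i>*A*(1 - R*F) - 2*(1 + R*F) + \<i>*A*(1 + R*F)))"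
    using assms i2 by algebra
  then show ?thesis using assms(3) by simp
qed

lemma h1:
  fixes p q d c e :: complex
  assumes "d \<noteq> 0"
  shows "(p * (q / d) + c) / (e * (q / d) - 2 + c) = (p * q + c * d) / (e * q - 2 * d + c * d)"
proof -
  have "(p * (q / d) + c) / (e * (q / d) - 2 + c) = (d * (p * (q / d) + c)) / (d * (e * (q / d) - 2 + c))"
    using assms by simp
  also have "d * (p * (q / d) + c) = p * q + c * d" using assms by (simp add: algebra_simps)
  also have "d * (e * (q / d) - 2 + c) = e * q - 2 * d + c * d" using assms by (simp add: algebra_simps)
  finally show ?thesis .
qed
lemma h2:
  fixes Y S q d R :: complex
  assumes "d \<noteq> 0"
  shows "\<i> * (Y / R) * ((S + \<i> * (q / d)) / (1 + \<i> * S * (q / d))) = \<i> * Y * (S * d + \<i> * q) / (R * (d + \<i> * S * q))"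
proof -
  have "(S + \<i> * (q / d)) / (1 + \<i> * S * (q / d)) = (d * (S + \<i> * (q / d))) / (d * (1 + \<i> * S * (q / d)))"
    using assms by simp
  also have "d * (S + \<i> * (q / d)) = S * d + \<i> * q" using assms by (simp add: algebra_simps)
  also have "d * (1 + \<i> * S * (q / d)) = d + \<i> * S * q" using assms by (simp add: algebra_simps)
  finally show ?thesis by simp
qed

theorem lemma3p7:
  fixes a \<beta> :: real
  defines "t0 \<equiv> - ln (sqrt (1 + a\<^sup>2))"
      and "s \<equiv> - a / (sqrt (1 + a\<^sup>2) + 1)"
  shows "s = - tan (arctan a / 2) \<and>
         (\<forall>t::real. gamma_h \<beta> a (t + t0) = gamma_v (\<beta> + pi/2 - 2 * arctan s) s t)"
proof -
  define r where "r = sqrt (1 + a\<^sup>2)"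
  have r0: "r > 0" unfolding r_def by (simp add: add_pos_nonneg)
  have r2: "r^2 = 1 + a^2" unfolding r_def by simp
  have ts: "tan (arctan a / 2) = a / (r + 1)"
  proof -
    have "tan (arctan a / 2) = sin (arctan a) / (cos (arctan a) + 1)"
      using tan_half[of "arctan a / 2"] by simp
    also have "\<dots> = (a / r) / (1 / r + 1)" by (simp add: sin_arctan cos_arctan r_def)
    also have "\<dots> = a / (r + 1)" using r0 by (simp add: field_simps)
    finally show ?thesis .
  qed
  have s1: "s = - tan (arctan a / 2)" unfolding s_def ts r_def by simp
  have as: "arctan s = - (arctan a / 2)"
    unfolding s1 arctan_minus
    using arctan_lbound[of a] arctan_ubound[of a] by (subst arctan_tan) auto
  have cisw: "cis (\<beta> + pi/2 - 2 * arctan s) = cis \<beta> * \<i> * ((1 + \<i> * of_real a) / of_real r)"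
  proof -
    have "cis (\<beta> + pi/2 - 2 * arctan s) = cis \<beta> * cis (pi/2) * cis (arctan a)"
    proof -
      have "\<beta> + pi/2 - 2 * arctan s = \<beta> + pi/2 + arctan a" by (simp add: as)
      then show ?thesis by (simp only: cis_mult)
    qed
    also have "cis (arctan a) = (1 + \<i> * of_real a) / of_real r"
      using r0 by (simp add: cis.ctr complex_eq_iff sin_arctan cos_arctan r_def[symmetric] field_simps)
    finally show ?thesis by simp
  qed
  have sr: "s * (r + 1) = - a" unfolding s_def r_def[symmetric] using r0
    by (simp add: field_simps)
  have main: "gamma_h \<beta> a (t + t0) = gamma_v (\<beta> + pi/2 - 2 * arctan s) s t" for t
  proof -
    define F where "F = exp (- t)"
    have F0: "F > 0" unfolding F_def by simp
    have e: "exp (- (t + t0)) = r * F"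
      unfolding F_def t0_def r_def[symmetric] using r0
      by (simp add: exp_diff divide_inverse exp_minus)
    have T: "tanh ((t + t0)/2) = (1 - r*F) / (1 + r*F)"
    proof -
      have h: "- 2 * ((t + t0)/2) = - (t + t0)" by simp
      show ?thesis using tanh_real_altdef[of "(t+t0)/2"] unfolding h e .
    qed
    have U: "tanh (t/2) = (1 - F) / (1 + F)"
    proof -
      have h: "- 2 * (t/2) = - t" by simp
      show ?thesis using tanh_real_altdef[of "t/2"] unfolding h F_def[symmetric] .
    qed
    have d1: "(1 + r*F) \<noteq> 0" using r0 F0 by (smt (verit) mult_pos_pos)
    have d2: "1 + F \<noteq> 0" using F0 by simp
    have d3: "\<i>* of_real a*(1 - of_real r* of_real F) - 2*(1 + of_real r* of_real F) + \<i>* of_real a*(1 + of_real r* of_real F) \<noteq> (0::complex)"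
    proof
      assume "\<i>* of_real a*(1 - of_real r* of_real F) - 2*(1 + of_real r* of_real F) + \<i>* of_real a*(1 + of_real r* of_real F) = (0::complex)"
      then have "Re (\<i>* of_real a*(1 - of_real r* of_real F) - 2*(1 + of_real r* of_real F) + \<i>* of_real a*(1 + of_real r* of_real F)) = 0" by simp
      then show False using r0 F0 by (simp add: mult.commute) (smt (verit) mult_pos_pos)
    qed
    have d4: "(1 + of_real F) + \<i>* of_real s*(1 - of_real F) \<noteq> (0::complex)"
    proof
      assume "(1 + of_real F) + \<i>* of_real s*(1 - of_real F) = (0::complex)"
      then have "Re ((1 + of_real F) + \<i>* of_real s*(1 - of_real F)) = 0" by simp
      then show False using F0 by simp
    qed
    define A where "A = complex_of_real a"
    define R where "R = complex_of_real r"
    define G where "G = complex_of_real F"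
    define S where "S = complex_of_real s"
    have K: "((2 + \<i> * A) * (1 - R * G) + \<i> * A * (1 + R * G)) * (R * ((1 + G) + \<i> * S * (1 - G)))
       = \<i> * (1 + \<i> * A) * (S * (1 + G) + \<i> * (1 - G)) * (\<i> * A * (1 - R * G) - 2 * (1 + R * G) + \<i> * A * (1 + R * G))"
    proof (rule key_alg)
      show "R^2 = 1 + A^2" unfolding R_def A_def by (metis r2 of_real_1 of_real_add of_real_power)
      show "S * (R + 1) = - A" unfolding R_def A_def S_def by (metis sr of_real_1 of_real_add of_real_mult of_real_minus)
      have "R + 1 = of_real (r + 1)" unfolding R_def by simp
      moreover have "r + 1 \<noteq> 0" using r0 by simp
      ultimately show "R + 1 \<noteq> 0" by (metis of_real_eq_0_iff)
    qed
    have D1: "1 + R * G \<noteq> 0" unfolding R_def G_def using d1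
      by (metis of_real_1 of_real_add of_real_eq_0_iff of_real_mult)
    have D2: "1 + G \<noteq> 0" unfolding G_def using d2
      by (metis of_real_1 of_real_add of_real_eq_0_iff)
    have D3: "\<i> * A * (1 - R * G) - 2 * (1 + R * G) + \<i> * A * (1 + R * G) \<noteq> 0"
      using d3 unfolding A_def R_def G_def .
    have D4: "(1 + G) + \<i> * S * (1 - G) \<noteq> 0" using d4 unfolding S_def G_def .
    have R0: "R \<noteq> 0" unfolding R_def using r0 by simp
    have L: "((2 + \<i> * A) * ((1 - R * G) / (1 + R * G)) + \<i> * A) /
             (\<i> * A * ((1 - R * G) / (1 + R * G)) - 2 + \<i> * A)
           = ((2 + \<i> * A) * (1 - R * G) + \<i> * A * (1 + R * G)) /
             (\<i> * A * (1 - R * G) - 2 * (1 + R * G) + \<i> * A * (1 + R * G))"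
      by (rule h1[OF D1])
    have RR: "\<i> * ((1 + \<i> * A) / R) * ((S + \<i> * ((1 - G) / (1 + G))) / (1 + \<i> * S * ((1 - G) / (1 + G))))
           = \<i> * (1 + \<i> * A) * (S * (1 + G) + \<i> * (1 - G)) / (R * ((1 + G) + \<i> * S * (1 - G)))"
      by (rule h2[OF D2])
    have M: "((2 + \<i> * A) * ((1 - R * G) / (1 + R * G)) + \<i> * A) /
             (\<i> * A * ((1 - R * G) / (1 + R * G)) - 2 + \<i> * A)
          = \<i> * ((1 + \<i> * A) / R) * ((S + \<i> * ((1 - G) / (1 + G))) / (1 + \<i> * S * ((1 - G) / (1 + G))))"
      unfolding L RR
    proof -
      have D5: "R * ((1 + G) + \<i> * S * (1 - G)) \<noteq> 0" using D4 R0 by simp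
      show "((2 + \<i> * A) * (1 - R * G) + \<i> * A * (1 + R * G)) /
             (\<i> * A * (1 - R * G) - 2 * (1 + R * G) + \<i> * A * (1 + R * G))
          = \<i> * (1 + \<i> * A) * (S * (1 + G) + \<i> * (1 - G)) / (R * ((1 + G) + \<i> * S * (1 - G)))"
        using frac_eq_eq[OF D3 D5] K by simp
    qed
    show ?thesis
      unfolding gamma_h_def gamma_v_def cisw T U
      using M unfolding A_def R_def G_def S_def by (simp add: mult.assoc)
  qed
  show ?thesis using s1 main by blast
qed

end
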